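(* Let $d\ge3$, $0\le k\le d$, $P$ the ultrahyperbolic operator of index $k$ on $L^2(\mathbb{R}^d)$, and $0\le s<1$. Then \[\sup_{z\in\mathbb{C}\setminus\sigma(P)}\|\langle x\rangle^{-s}(P-z)^{-1}\langle x\rangle^{-s}\|_{B(L^2(\mathbb{R}^d))}=\infty.\]
   Context: $D_x=(2\pi i)^{-1}\nabla_x$; $P=\sum_{j=1}^kD_{x_j}^2-\sum_{j=k+1}^dD_{x_j}^2$, the Fourier multiplier by $\xi_1^2+\dots+\xi_k^2-\xi_{k+1}^2-\dots-\xi_d^2$, self-adjoint on $L^2(\mathbb{R}^d)$, with spectrum $\sigma(P)$. $\langle x\rangle=(1+|x|^2)^{1/2}$. *)

theory Defs
  imports "HOL-Analysis.Analysis"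
begin

definition japan :: "real^'n \<Rightarrow> real" where
  "japan x = sqrt (1 + (norm x)^2)"

text \<open>Symbol of the ultrahyperbolic operator; K is the set of the k coordinates with sign +.\<close>
definition uh_symbol :: "'n::finite set \<Rightarrow> real^'n \<Rightarrow> real" where
  "uh_symbol K \<xi> = (\<Sum>j\<in>K. (\<xi>$j)^2) - (\<Sum>j\<in>-K. (\<xi>$j)^2)"

text \<open>Spectrum of the Fourier multiplier P (closure of the range of its continuous symbol).\<close>
definition spec_P :: "'n::finite set \<Rightarrow> complex set" where
  "spec_P K = closure (complex_of_real ` range (uh_symbol K))"

text \<open>Fourier transform with the convention D = (2 pi i)^(-1) nabla.\<close>
definition fourier :: "(real^'n \<Rightarrow> complex) \<Rightarrow> real^'n \<Rightarrow> complex" where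
  "fourier f \<xi> = integral\<^sup>L lborel (\<lambda>x. f x * cis (- 2 * pi * (x \<bullet> \<xi>)))"

definition l2norm :: "(real^'n \<Rightarrow> complex) \<Rightarrow> real" where
  "l2norm f = sqrt (integral\<^sup>L lborel (\<lambda>x. (cmod (f x))^2))"

text \<open>Continuous compactly supported functions (a dense subspace of L^2).\<close>
definition Cc :: "(real^'n \<Rightarrow> complex) set" where
  "Cc = {f. continuous_on UNIV f \<and> bounded {x. f x \<noteq> 0}}"

text \<open>The sesquilinear form of <x>^(-s) (P-z)^(-1) <x>^(-s), computed via Plancherel:
  < <x>^(-s) (P-z)^(-1) <x>^(-s) f, g > .\<close>
definition wres_form ::
  "'n::finite set \<Rightarrow> real \<Rightarrow> complex \<Rightarrow> (real^'n \<Rightarrow> complex) \<Rightarrow> (real^'n \<Rightarrow> complex) \<Rightarrow> complex" where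
  "wres_form K s z f g =
     integral\<^sup>L lborel (\<lambda>\<xi>.
        fourier (\<lambda>x. complex_of_real (japan x powr (-s)) * f x) \<xi>
      * cnj (fourier (\<lambda>x. complex_of_real (japan x powr (-s)) * g x) \<xi>)
      / (complex_of_real (uh_symbol K \<xi>) - z))"

text \<open>Operator norm on B(L^2) (possibly infinite), as the supremum of the form over a dense subspace.\<close>
definition wres_norm :: "'n::finite set \<Rightarrow> real \<Rightarrow> complex \<Rightarrow> ereal" where
  "wres_norm K s z =
     (SUP fg \<in> {(f, g). f \<in> Cc \<and> g \<in> Cc \<and> l2norm f > 0 \<and> l2norm g > 0}.
        ereal (cmod (wres_form K s z (fst fg) (snd fg)) / (l2norm (fst fg) * l2norm (snd fg))))"

end

theory Submission
  imports Defs "HOL-Probability.Sinc_Integral"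
begin

definition phiR :: "real \<Rightarrow> real \<Rightarrow> real" where "phiR R t = max 0 (1 - \<bar>t\<bar>/R)"
definition psiR :: "real \<Rightarrow> real \<Rightarrow> real" where
  "psiR R a = (if a = 0 then R else (1 - cos (2*pi*a*R)) / (2*pi^2*a^2*R))"

lemma phiR_pos: "R > 0 \<Longrightarrow> 0 \<le> t \<Longrightarrow> t \<le> R \<Longrightarrow> phiR R t = 1 - t/R"
  by (auto simp: phiR_def field_simps)
lemma phiR_neg: "R > 0 \<Longrightarrow> -R \<le> t \<Longrightarrow> t \<le> 0 \<Longrightarrow> phiR R t = 1 + t/R"
  by (auto simp: phiR_def field_simps)
lemma phiR_zero: assumes "R > 0" "t \<notin> {-R..R}" shows "phiR R t = 0"
proof -
  have "R < \<bar>t\<bar>" using assms by auto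
  then have "1 < \<bar>t\<bar>/R" using assms by (simp add: field_simps)
  then show ?thesis by (simp add: phiR_def)
qed

lemma antider:
  fixes A B K :: complex
  shows "((\<lambda>t::real. (A + B * of_real t) * exp (K * of_real t)) has_vector_derivative
          ((B + K * (A + B * of_real t)) * exp (K * of_real t))) (at t within S)"
proof -
  have "((\<lambda>w. (A + B * w) * exp (K * w)) has_field_derivative
          ((B + K * (A + B * of_real t)) * exp (K * of_real t))) (at (of_real t))"
    by (auto intro!: derivative_eq_intros simp: algebra_simps)
  then show ?thesis by (rule has_vector_derivative_real_field)
qed

lemma ft1_HK:
  assumes R: "R > 0"
  shows "((\<lambda>t. complex_of_real (phiR R t) * cis (-2*pi*(t*a))) has_integral complex_of_real (psiR R a)) {-R..R}"
proof (cases "a = 0")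
  case True
  have d1: "((\<lambda>t. complex_of_real (t - t^2/(2*R))) has_vector_derivative complex_of_real (1 - t/R)) (at t within {0..R})" for t
  proof -
    have "((\<lambda>t. t - t^2/(2*R)) has_real_derivative (1 - t/R)) (at t within {0..R})"
      using R by (auto intro!: derivative_eq_intros simp: field_simps)
    from has_vector_derivative_of_real[OF this] show ?thesis .
  qed
  have d2: "((\<lambda>t. complex_of_real (t + t^2/(2*R))) has_vector_derivative complex_of_real (1 + t/R)) (at t within {-R..0})" for t
  proof -
    have "((\<lambda>t. t + t^2/(2*R)) has_real_derivative (1 + t/R)) (at t within {-R..0})"
      using R by (auto intro!: derivative_eq_intros simp: field_simps)
    from has_vector_derivative_of_real[OF this] show ?thesis .
  qed
  have "((\<lambda>t. complex_of_real (1 - t/R)) has_integral (complex_of_real (R - R^2/(2*R)) - complex_of_real (0 - 0^2/(2*R)))) {0..R}"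
    by (rule fundamental_theorem_of_calculus[OF _ d1]) (use R in auto)
  then have "((\<lambda>t. complex_of_real (1 - t/R)) has_integral complex_of_real (R/2)) {0..R}"
    using R by (simp add: power2_eq_square)
  then have i1: "((\<lambda>t. complex_of_real (phiR R t) * cis (-2*pi*(t*a))) has_integral complex_of_real (R/2)) {0..R}"
    by (rule has_integral_eq[rotated]) (use R True in \<open>auto simp: phiR_pos phiR_neg\<close>)
  have "((\<lambda>t. complex_of_real (1 + t/R)) has_integral (complex_of_real (0 + 0^2/(2*R)) - complex_of_real (-R + (-R)^2/(2*R)))) {-R..0}"
    by (rule fundamental_theorem_of_calculus[OF _ d2]) (use R in auto)
  then have "((\<lambda>t. complex_of_real (1 + t/R)) has_integral complex_of_real (R/2)) {-R..0}"
    using R by (simp add: power2_eq_square)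
  then have i2: "((\<lambda>t. complex_of_real (phiR R t) * cis (-2*pi*(t*a))) has_integral complex_of_real (R/2)) {-R..0}"
    by (rule has_integral_eq[rotated]) (use R True in \<open>auto simp: phiR_pos phiR_neg\<close>)
  show ?thesis using has_integral_combine[OF _ _ i2 i1] R True
    by (simp add: psiR_def flip: of_real_add)
next
  case False
  define c where "c = complex_of_real (2*pi*a)"
  have c0: "c \<noteq> 0" using False by (simp add: c_def)
  define K where "K = - \<i> * c"
  have cisK: "cis (-2*pi*(t*a)) = exp (K * of_real t)" for t
    by (simp add: cis_conv_exp K_def c_def algebra_simps)
  have cisK': "cis (-(2*pi*(t*a))) = exp (K * of_real t)" for t
    using cisK[of t] by simp
  define A1 where "A1 = \<i>/c - 1/(of_real R * c^2)"
  define B1 where "B1 = - \<i>/(of_real R * c)"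
  define A2 where "A2 = \<i>/c + 1/(of_real R * c^2)"
  define B2 where "B2 = \<i>/(of_real R * c)"
  have e1: "B1 + K * (A1 + B1 * of_real t) = of_real (1 - t/R)" for t
    using c0 R by (simp add: A1_def B1_def K_def field_simps power2_eq_square)
  have e2: "B2 + K * (A2 + B2 * of_real t) = of_real (1 + t/R)" for t
    using c0 R by (simp add: A2_def B2_def K_def field_simps power2_eq_square)
  have i1: "((\<lambda>t. complex_of_real (phiR R t) * cis (-2*pi*(t*a))) has_integral
       ((A1 + B1 * of_real R) * exp (K * of_real R) - (A1 + B1 * of_real 0) * exp (K * of_real 0))) {0..R}"
    apply (rule has_integral_eq[OF _ fundamental_theorem_of_calculus[OF _ antider]])
    using R by (auto simp: phiR_pos e1 cisK cisK')
  have i2: "((\<lambda>t. complex_of_real (phiR R t) * cis (-2*pi*(t*a))) has_integral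
       ((A2 + B2 * of_real 0) * exp (K * of_real 0) - (A2 + B2 * of_real (-R)) * exp (K * of_real (-R)))) {-R..0}"
    apply (rule has_integral_eq[OF _ fundamental_theorem_of_calculus[OF _ antider]])
    using R by (auto simp: phiR_neg e2 cisK cisK')
  have cosR: "exp (K * of_real R) + exp (- (K * of_real R)) = 2 * of_real (cos (2*pi*a*R))"
  proof -
    define w where "w = complex_of_real (2*pi*a*R)"
    have kw: "K * of_real R = - (\<i> * w)" by (simp add: K_def c_def w_def algebra_simps)
    have "exp (K * of_real R) + exp (- (K * of_real R)) = exp (\<i> * w) + exp (- (\<i> * w))"
      by (simp only: kw minus_minus add.commute)
    also have "\<dots> = 2 * cos w" by (simp add: cos_exp_eq[of w])
    also have "\<dots> = 2 * of_real (cos (2*pi*a*R))" by (simp only: w_def cos_of_real)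
    finally show ?thesis .
  qed
  have val: "((A2 + B2 * of_real 0) * exp (K * of_real 0) - (A2 + B2 * of_real (-R)) * exp (K * of_real (-R)))
     + ((A1 + B1 * of_real R) * exp (K * of_real R) - (A1 + B1 * of_real 0) * exp (K * of_real 0))
     = complex_of_real (psiR R a)" (is "?L = _")
  proof -
    have "?L = (2 - (exp (K * of_real R) + exp (- (K * of_real R)))) / (of_real R * c^2)"
      using c0 R by (simp add: A1_def B1_def A2_def B2_def field_simps)
    also have "... = complex_of_real (psiR R a)"
      unfolding cosR using False R by (simp add: psiR_def c_def field_simps power2_eq_square)
    finally show ?thesis .
  qed
  show ?thesis using has_integral_combine[OF _ _ i2 i1] R val by simp
qed


lemma continuous_phiR: "continuous_on A (phiR R)"
  unfolding phiR_def divide_inverse by (intro continuous_intros)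

lemma ft1:
  assumes R: "R > 0"
  shows "integrable lborel (\<lambda>t. complex_of_real (phiR R t) * cis (-2*pi*(t*a)))"
    "integral\<^sup>L lborel (\<lambda>t. complex_of_real (phiR R t) * cis (-2*pi*(t*a))) = complex_of_real (psiR R a)"
proof -
  let ?g = "\<lambda>t. complex_of_real (phiR R t) * cis (-2*pi*(t*a))"
  have eq: "(\<lambda>t. indicator {-R..R} t *\<^sub>R ?g t) = ?g"
    using phiR_zero[OF R] by (auto simp: fun_eq_iff split: split_indicator)
  have "integrable lborel (\<lambda>t. indicator {-R..R} t *\<^sub>R ?g t)"
    by (intro borel_integrable_compact compact_Icc continuous_intros continuous_on_of_real continuous_phiR)
  then show int: "integrable lborel ?g" by (simp only: eq)
  have "(?g has_integral complex_of_real (psiR R a)) UNIV"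
    by (rule has_integral_on_superset[OF ft1_HK[OF R]]) (use phiR_zero[OF R] in auto)
  with has_integral_integral_lborel[OF int] show "integral\<^sup>L lborel ?g = complex_of_real (psiR R a)"
    using has_integral_unique by blast
qed

lemma one_minus_cos_le: "1 - cos (x::real) \<le> x^2/2"
proof -
  have "cos x = 1 - 2 * sin (x/2) ^ 2" using cos_double_sin[of "x/2"] by simp
  moreover have "sin (x/2) ^ 2 \<le> (x/2)^2"
    using abs_sin_x_le_abs_x[of "x/2"] by (metis abs_ge_zero power2_abs power_mono)
  ultimately show ?thesis by (simp add: power2_eq_square)
qed

lemma one_minus_cos_ge: assumes "\<bar>x\<bar> \<le> pi/3" shows "x^2/4 \<le> 1 - (cos (x::real))"
proof -
  define y where "y = x/2"
  have y: "\<bar>y\<bar> \<le> 7/10" using assms pi_less_4 by (simp add: y_def)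
  have "cos x = 1 - 2 * sin y ^ 2" using cos_double_sin[of "x/2"] by (simp add: y_def)
  have mb: "\<bar>sin y - y\<bar> \<le> \<bar>y\<bar>^3/6"
  proof -
    have s: "(\<Sum>m<3. sin_coeff m * y^m) = y" by (simp add: sin_coeff_def eval_nat_numeral)
    have f: "inverse (fact 3) = (1/6::real)" by (simp add: eval_nat_numeral)
    show ?thesis using Maclaurin_sin_bound[of y 3] unfolding s f by simp
  qed
  have "\<bar>y\<bar>^3/6 \<le> \<bar>y\<bar> * (49/100)/6"
  proof -
    have "\<bar>y\<bar>^2 \<le> (7/10)^2" using y by (intro power_mono) auto
    then have "\<bar>y\<bar>^2 \<le> 49/100" by (simp add: power2_eq_square)
    then have "\<bar>y\<bar> * \<bar>y\<bar>^2 \<le> \<bar>y\<bar> * (49/100)" by (intro mult_left_mono) auto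
    moreover have "\<bar>y\<bar>^3 = \<bar>y\<bar> * \<bar>y\<bar>^2" by (simp add: power3_eq_cube power2_eq_square)
    ultimately have "\<bar>y\<bar>^3 \<le> \<bar>y\<bar> * (49/100)" by linarith
    then show ?thesis by simp
  qed
  with mb have "\<bar>sin y\<bar> \<ge> \<bar>y\<bar> * (91/100)" by linarith
  then have "(sin y)^2 \<ge> (\<bar>y\<bar> * (91/100))^2" by (metis abs_ge_zero mult_nonneg_nonneg power2_abs power_mono zero_le_divide_iff zero_le_numeral)
  moreover have "(\<bar>y\<bar> * (91/100))^2 = y^2 * (8281/10000)" by (subst power_mult_distrib) (simp add: power2_abs power2_eq_square)
  moreover have "0 \<le> y^2" by simp
  ultimately have "(sin y)^2 \<ge> y^2/2" by linarith
  with \<open>cos x = _\<close> show ?thesis by (simp add: y_def power_divide)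
qed

lemma psiR_nonneg: "R > 0 \<Longrightarrow> 0 \<le> psiR R a"
  by (auto simp: psiR_def intro!: divide_nonneg_pos)

lemma psiR_le: assumes R: "R > 0" shows "psiR R a \<le> R"
proof (cases "a = 0")
  case False
  have "1 - cos (2*pi*a*R) \<le> (2*pi*a*R)^2/2" by (rule one_minus_cos_le)
  then have "(1 - cos (2*pi*a*R)) / (2*pi^2*a^2*R) \<le> ((2*pi*a*R)^2/2) / (2*pi^2*a^2*R)"
    using False R by (intro divide_right_mono) auto
  also have "\<dots> = R" using False R by (simp add: power2_eq_square field_simps)
  finally show ?thesis using False by (simp add: psiR_def)
qed (simp add: psiR_def)

lemma psiR_le2: assumes R: "R > 0" and a: "a \<noteq> 0" shows "psiR R a \<le> 1 / (a^2 * R)"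
proof -
  have "(1 - cos (2*pi*a*R)) / (2*pi^2*a^2*R) \<le> 2 / (2*pi^2*a^2*R)"
    using a R by (intro divide_right_mono) auto
  also have "\<dots> = 1 / (pi^2 * (a^2 * R))" by simp
  also have "\<dots> \<le> 1 / (a^2 * R)"
  proof -
    have p: "1 \<le> pi^2" using pi_gt3 by (simp add: power2_eq_square) (smt (verit) mult_less_cancel_left2)
    have q: "0 < a^2 * R" using a R by simp
    have "1 * (a^2*R) \<le> pi^2 * (a^2 * R)" using p q by (intro mult_right_mono) auto
    then show ?thesis using q by (intro divide_left_mono) auto
  qed
  finally show ?thesis using a by (simp add: psiR_def)
qed

lemma psiR_decay: assumes R: "R > 0" shows "psiR R a \<le> 2 * (R + 1/R) / (1 + a^2)"
proof (cases "a^2 \<le> 1")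
  case True
  have "psiR R a \<le> R" by (rule psiR_le[OF R])
  also have "R \<le> 2 * (R + 1/R) / (1 + a^2)"
  proof -
    have "R * (1 + a^2) \<le> R * 2" using True R by (intro mult_left_mono) auto
    also have "\<dots> \<le> 2 * (R + 1/R)" using R by simp
    finally show ?thesis by (simp add: pos_le_divide_eq add_pos_nonneg)
  qed
  finally show ?thesis .
next
  case False
  then have a: "a \<noteq> 0" by auto
  have "psiR R a \<le> 1 / (a^2 * R)" by (rule psiR_le2[OF R a])
  also have "\<dots> = (2/R) / (2*a^2)" by simp
  also have "\<dots> \<le> (2/R) / (1 + a^2)" using False R by (intro divide_left_mono) (auto simp: zero_less_mult_iff add_pos_nonneg)
  also have "\<dots> \<le> 2 * (R + 1/R) / (1 + a^2)" using R by (intro divide_right_mono) (auto simp: add_pos_nonneg)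
  finally show ?thesis .
qed

lemma psiR_ge: assumes R: "R > 0" and a: "\<bar>a\<bar> \<le> 1/(6*R)" shows "R/2 \<le> psiR R a"
proof (cases "a = 0")
  case False
  have "\<bar>2*pi*a*R\<bar> \<le> pi/3"
  proof -
    have "\<bar>2*pi*a*R\<bar> = 2*pi*R*\<bar>a\<bar>" using R by (simp add: abs_mult)
    also have "\<dots> \<le> 2*pi*R*(1/(6*R))" using a R by (intro mult_left_mono) auto
    also have "\<dots> = pi/3" using R by simp
    finally show ?thesis .
  qed
  then have "(2*pi*a*R)^2/4 \<le> 1 - cos (2*pi*a*R)" by (rule one_minus_cos_ge)
  then have "((2*pi*a*R)^2/4) / (2*pi^2*a^2*R) \<le> (1 - cos (2*pi*a*R)) / (2*pi^2*a^2*R)"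
    using False R by (intro divide_right_mono) auto
  moreover have "((2*pi*a*R)^2/4) / (2*pi^2*a^2*R) = R/2" using False R by (simp add: power2_eq_square field_simps)
  ultimately have "R/2 \<le> (1 - cos (2*pi*a*R)) / (2*pi^2*a^2*R)" by linarith
  then show ?thesis unfolding psiR_def using False by (simp only: if_False)
qed (use R in \<open>simp add: psiR_def\<close>)

lemma psiR_measurable[measurable]: "psiR R \<in> borel_measurable borel"
  unfolding psiR_def by measurable

lemma lborel_prod_aux:
  fixes f :: "'a::euclidean_space \<Rightarrow> real \<Rightarrow> 'b::{real_normed_field,banach,second_countable_topology}"
  assumes int: "\<And>b. b \<in> Basis \<Longrightarrow> integrable lborel (f b)"
  shows "integrable lborel (\<lambda>x::'a. \<Prod>b\<in>Basis. f b (x \<bullet> b)) \<and>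
         integral\<^sup>L lborel (\<lambda>x::'a. \<Prod>b\<in>Basis. f b (x \<bullet> b)) = (\<Prod>b\<in>Basis. integral\<^sup>L lborel (f b))"
proof -
  interpret product_sigma_finite "\<lambda>_::'a. (lborel::real measure)" by standard
  have meas[measurable]: "\<And>b. b \<in> Basis \<Longrightarrow> f b \<in> borel_measurable borel"
    using int by (simp add: borel_measurable_integrable)
  have mg: "(\<lambda>g. \<Sum>b\<in>Basis. g b *\<^sub>R b) \<in> measurable (\<Pi>\<^sub>M b\<in>Basis. (lborel::real measure)) (borel::'a measure)"
    by measurable
  have mF: "(\<lambda>x::'a. \<Prod>b\<in>Basis. f b (x \<bullet> b)) \<in> borel_measurable borel"
    by measurable
  have inn: "\<And>g b. b \<in> Basis \<Longrightarrow> (\<Sum>b'\<in>Basis. g b' *\<^sub>R b') \<bullet> (b::'a) = g b"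
    by (simp add: inner_sum_left inner_Basis if_distrib cong: if_cong)
  have eq: "\<And>g. (\<Prod>b\<in>Basis. f b ((\<Sum>b'\<in>Basis. g b' *\<^sub>R b') \<bullet> b)) = (\<Prod>b\<in>Basis. f b (g b))"
    by (intro prod.cong refl) (simp add: inn)
  have L: "(lborel::'a measure) = distr (\<Pi>\<^sub>M b\<in>Basis. lborel) borel (\<lambda>g. \<Sum>b\<in>Basis. g b *\<^sub>R b)"
    by (rule lborel_eq)
  show ?thesis
    apply (subst (1 2) L)
    apply (subst integrable_distr_eq[OF mg mF])
    apply (subst integral_distr[OF mg mF])
    apply (simp only: eq)
    using product_integrable_prod[of Basis f] product_integral_prod[of Basis f] int by auto
qed

lemma cis_sum: "finite A \<Longrightarrow> cis (\<Sum>i\<in>A. f i) = (\<Prod>i\<in>A. cis (f i))"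
  by (induction rule: finite_induct) (simp_all add: cis_mult[symmetric])

definition hR :: "real \<Rightarrow> 'a::euclidean_space \<Rightarrow> real" where "hR R x = (\<Prod>b\<in>Basis. phiR R (x \<bullet> b))"
definition PsiR :: "real \<Rightarrow> 'a::euclidean_space \<Rightarrow> real" where "PsiR R \<xi> = (\<Prod>b\<in>Basis. psiR R (\<xi> \<bullet> b))"

lemma fourier_hR:
  fixes \<xi> :: "real^'n::finite"
  assumes R: "R > 0"
  shows "fourier (\<lambda>x. complex_of_real (hR R x)) \<xi> = complex_of_real (PsiR R \<xi>)"
proof -
  have eq: "(\<lambda>x. complex_of_real (hR R x) * cis (- 2 * pi * (x \<bullet> \<xi>))) =
    (\<lambda>x. \<Prod>b\<in>Basis. (\<lambda>t. complex_of_real (phiR R t) * cis (-2*pi*(t*(\<xi>\<bullet>b)))) (x\<bullet>b))"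
  proof
    fix x :: "real^'n"
    have "x \<bullet> \<xi> = (\<Sum>b\<in>Basis. (x\<bullet>b)*(\<xi>\<bullet>b))" by (rule euclidean_inner)
    then have "cis (-2*pi*(x\<bullet>\<xi>)) = (\<Prod>b\<in>Basis. cis (-2*pi*((x\<bullet>b)*(\<xi>\<bullet>b))))"
      by (simp add: sum_distrib_left cis_sum)
    then show "complex_of_real (hR R x) * cis (- 2 * pi * (x \<bullet> \<xi>)) =
      (\<Prod>b\<in>Basis. (\<lambda>t. complex_of_real (phiR R t) * cis (-2*pi*(t*(\<xi>\<bullet>b)))) (x\<bullet>b))"
      by (simp add: hR_def of_real_prod prod.distrib)
  qed
  show ?thesis
    unfolding fourier_def eq
    using lborel_prod_aux[of "\<lambda>b t. complex_of_real (phiR R t) * cis (-2*pi*(t*(\<xi>\<bullet>b)))"] ft1[OF R]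
    by (simp add: PsiR_def of_real_prod)
qed

lemma psi2_int: assumes R: "R > 0" shows "integrable lborel (\<lambda>a. (psiR R a)^2)"
proof -
  have i1: "integrable lborel (\<lambda>x::real. inverse (1 + x^2))"
    using integrable_inverse_1_plus_square by (simp add: set_integrable_def einterval_def)
  show ?thesis
  proof (rule Bochner_Integration.integrable_bound)
    show "integrable lborel (\<lambda>x. (R * (2 * (R + 1/R))) * inverse (1 + x^2))"
      using i1 by (rule integrable_mult_right)
    show "(\<lambda>a. (psiR R a)^2) \<in> borel_measurable lborel" by measurable
    show "AE x in lborel. norm ((psiR R x)^2) \<le> norm ((R * (2 * (R + 1/R))) * inverse (1 + x^2))"
    proof (rule AE_I2)
      fix x
      have p0: "0 \<le> psiR R x" by (rule psiR_nonneg[OF R])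
      have "(psiR R x)^2 \<le> R * psiR R x" using p0 psiR_le[OF R, of x] by (simp add: power2_eq_square mult_right_mono)
      also have "\<dots> \<le> R * (2 * (R + 1/R) / (1 + x^2))" using R psiR_decay[OF R, of x] by (intro mult_left_mono) auto
      finally show "norm ((psiR R x)^2) \<le> norm ((R * (2 * (R + 1/R))) * inverse (1 + x^2))"
        using R by (simp add: divide_inverse mult.assoc add_pos_nonneg)
    qed
  qed
qed

lemma PsiR2_int: assumes R: "R > 0" shows "integrable lborel (\<lambda>\<xi>::'a::euclidean_space. (PsiR R \<xi>)^2)"
proof -
  have "integrable lborel (\<lambda>x::'a. \<Prod>b\<in>Basis. (\<lambda>a. (psiR R a)^2) (x \<bullet> b))"
    using lborel_prod_aux[of "\<lambda>b a. (psiR R a)^2"] psi2_int[OF R] by blast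
  then show ?thesis by (simp add: PsiR_def prod_power_distrib)
qed

lemma indic_prod:
  assumes "\<delta> > 0" and "c \<ge> 0"
  shows "integrable lborel (\<lambda>x::'a::euclidean_space. \<Prod>b\<in>Basis. (\<lambda>t. c * indicator {-\<delta>..\<delta>} t) (x \<bullet> b))
     \<and> integral\<^sup>L lborel (\<lambda>x::'a. \<Prod>b\<in>Basis. (\<lambda>t. c * indicator {-\<delta>..\<delta>} t) (x \<bullet> b)) = (c * (2*\<delta>))^DIM('a)"
proof -
  have i: "integrable lborel (\<lambda>t::real. c * indicator {-\<delta>..\<delta>} t)"
  proof -
    have "emeasure lborel {-\<delta>..\<delta>} < \<infinity>" using assms by simp
    then show ?thesis by (intro integrable_mult_right integrable_real_indicator) auto
  qed
  have v: "integral\<^sup>L lborel (\<lambda>t::real. c * indicator {-\<delta>..\<delta>} t) = c * (2*\<delta>)"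
    using assms by simp
  have "integrable lborel (\<lambda>x::'a. \<Prod>b\<in>Basis. (\<lambda>t. c * indicator {-\<delta>..\<delta>} t) (x \<bullet> b))
     \<and> integral\<^sup>L lborel (\<lambda>x::'a. \<Prod>b\<in>Basis. (\<lambda>t. c * indicator {-\<delta>..\<delta>} t) (x \<bullet> b))
        = (\<Prod>b\<in>(Basis::'a set). integral\<^sup>L lborel (\<lambda>t::real. c * indicator {-\<delta>..\<delta>} t))"
    by (rule lborel_prod_aux) (rule i)
  then show ?thesis using v assms by simp
qed

lemma uh_bound: fixes \<xi> :: "real^'n::finite" shows "\<bar>uh_symbol K \<xi>\<bar> \<le> (\<Sum>b\<in>Basis. (\<xi> \<bullet> b)^2)"
proof -
  have s: "(\<Sum>j\<in>K. (\<xi>$j)^2) + (\<Sum>j\<in>-K. (\<xi>$j)^2) = (\<Sum>j\<in>UNIV. (\<xi>$j)^2)"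
    by (subst sum.union_disjoint[symmetric]) auto
  have "\<xi> \<bullet> \<xi> = (\<Sum>j\<in>UNIV. (\<xi>$j)^2)" by (simp add: inner_vec_def power2_eq_square)
  moreover have "\<xi> \<bullet> \<xi> = (\<Sum>b\<in>Basis. (\<xi> \<bullet> b)^2)" by (simp add: euclidean_inner[of \<xi> \<xi>] power2_eq_square)
  moreover have "0 \<le> (\<Sum>j\<in>K. (\<xi>$j)^2)" "0 \<le> (\<Sum>j\<in>-K. (\<xi>$j)^2)" by (auto intro: sum_nonneg)
  ultimately show ?thesis using s unfolding uh_symbol_def by linarith
qed

lemma japan_ge1: "1 \<le> japan x" by (simp add: japan_def)

lemma phiR_bounds: "R > 0 \<Longrightarrow> 0 \<le> phiR R t \<and> phiR R t \<le> 1"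
  by (auto simp: phiR_def)

lemma phiR_indic: assumes R: "R > 0" shows "phiR R t \<le> indicator {-R..R} t"
  using phiR_zero[OF R, of t] phiR_bounds[OF R, of t] by (auto split: split_indicator)

lemma phiR_half: assumes R: "R > 0" and t: "\<bar>t\<bar> \<le> R/2" shows "1/2 \<le> phiR R t"
proof -
  have "\<bar>t\<bar>/R \<le> 1/2" using R t by (simp add: field_simps)
  then have "1/2 \<le> 1 - \<bar>t\<bar>/R" by linarith
  then show ?thesis unfolding phiR_def by (rule order_trans[OF _ max.cobounded2])
qed

lemma continuous_hR: "continuous_on UNIV (hR R :: 'a::euclidean_space \<Rightarrow> real)"
  unfolding hR_def phiR_def divide_inverse by (intro continuous_intros)

lemma hR_support: assumes R: "R > 0" and h: "hR R x \<noteq> 0" and b: "b \<in> Basis" shows "\<bar>x \<bullet> b\<bar> \<le> R"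
proof (rule ccontr)
  assume "\<not> ?thesis"
  then have "x \<bullet> b \<notin> {-R..R}" by auto
  then have "phiR R (x \<bullet> b) = 0" using phiR_zero[OF R] by blast
  then have "hR R x = 0" unfolding hR_def using b by (intro prod_zero) auto
  with h show False by simp
qed

lemma hR_norm: assumes R: "R > 0" and h: "hR R (x::'a::euclidean_space) \<noteq> 0" shows "norm x \<le> real DIM('a) * R"
proof -
  have "norm x \<le> (\<Sum>b\<in>Basis. \<bar>x \<bullet> b\<bar>)" by (rule norm_le_l1)
  also have "\<dots> \<le> (\<Sum>b\<in>(Basis::'a set). R)" using hR_support[OF R h] by (intro sum_mono) auto
  finally show ?thesis by simp
qed

lemma hR_bounds: assumes R: "R > 0" shows "0 \<le> hR R x \<and> hR R x \<le> 1"
  unfolding hR_def using phiR_bounds[OF R] by (auto intro!: prod_nonneg prod_le_1)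

lemma l2_part:
  fixes s R :: real
  assumes s: "0 \<le> s" and R: "R \<ge> 1"
  defines "f \<equiv> (\<lambda>x::real^'n::finite. complex_of_real (japan x powr s * hR R x))"
  defines "D \<equiv> DIM(real^'n)"
  shows "f \<in> Cc" "integrable lborel (\<lambda>x. (cmod (f x))^2)"
    "0 < integral\<^sup>L lborel (\<lambda>x. (cmod (f x))^2)"
    "integral\<^sup>L lborel (\<lambda>x. (cmod (f x))^2) \<le> ((1 + (real D)^2) powr s) * (R powr (2 * s)) * ((2*R)^D)"
proof -
  have R0: "R > 0" using R by simp
  have jp: "0 < japan x" for x using japan_ge1[of x] by simp
  have cf: "continuous_on UNIV f"
    unfolding f_def japan_def using continuous_hR[of R]
    by (intro continuous_intros) (auto, smt (verit) zero_le_power2)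
  have "{x. f x \<noteq> 0} \<subseteq> cball 0 (real D * R)"
  proof
    fix x :: "real^'n" assume "x \<in> {x. f x \<noteq> 0}"
    then have "hR R x \<noteq> 0" by (auto simp: f_def)
    from hR_norm[OF R0 this] show "x \<in> cball 0 (real D * R)" by (simp add: D_def)
  qed
  then have "bounded {x. f x \<noteq> 0}" using bounded_cball bounded_subset by blast
  with cf show "f \<in> Cc" by (simp add: Cc_def)
  define W where "W = (1 + (real D)^2) powr s * R powr (2 * s)"
  have W0: "0 \<le> W" unfolding W_def by simp
  have cm: "(cmod (f x))^2 = (japan x powr s)^2 * (hR R x)^2" for x
    unfolding f_def norm_of_real power2_abs by (simp add: power_mult_distrib)
  have up: "(cmod (f x))^2 \<le> W * (\<Prod>b\<in>Basis. (\<lambda>t. 1 * indicator {-R..R} t) (x \<bullet> b))" for x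
  proof (cases "hR R x = 0")
    case True then show ?thesis by (simp add: cm W_def prod_nonneg)
  next
    case False
    have ind: "(\<Prod>b\<in>Basis. (\<lambda>t. 1 * indicator {-R..R} t) (x \<bullet> b)) = (1::real)"
      using hR_support[OF R0 False] by (intro prod.neutral) (auto simp: indicator_def abs_le_iff, fastforce)
    have nx: "norm x \<le> real D * R" using hR_norm[OF R0 False] by (simp add: D_def)
    have "(japan x powr s)^2 = (1 + (norm x)^2) powr s"
    proof -
      have u0: "0 \<le> 1 + (norm x)^2" by (smt (verit) zero_le_power2)
      have j: "japan x = (1 + (norm x)^2) powr (1/2)" unfolding japan_def using u0 by (simp add: powr_half_sqrt)
      have "(japan x powr s)^2 = japan x powr s * japan x powr s" by (simp add: power2_eq_square)
      also have "\<dots> = japan x powr (s + s)" by (rule powr_add[symmetric])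
      also have "\<dots> = (1 + (norm x)^2) powr s" unfolding j powr_powr by simp
      finally show ?thesis .
    qed
    also have "\<dots> \<le> ((1 + (real D)^2) * R^2) powr s"
    proof (rule powr_mono2[OF s])
      show "0 \<le> 1 + (norm x)^2" by simp
      have "(norm x)^2 \<le> (real D * R)^2" using nx by (intro power_mono) auto
      also have "\<dots> = (real D)^2 * R^2" by (simp add: power_mult_distrib)
      finally have n2: "(norm x)^2 \<le> (real D)^2 * R^2" .
      have r2: "1 \<le> R^2" using R by (simp add: one_le_power)
      have "(1 + (real D)^2) * R^2 = R^2 + (real D)^2 * R^2" by (simp add: algebra_simps)
      then show "1 + (norm x)^2 \<le> (1 + (real D)^2) * R^2" using n2 r2 by linarith
    qed
    also have "\<dots> = W"
    proof -
      have "((1 + (real D)^2) * R^2) powr s = (1 + (real D)^2) powr s * (R^2) powr s"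
        by (rule powr_mult)
      moreover have "R^2 = R powr 2" using R0 by (simp add: powr_numeral)
      moreover have "(R powr 2) powr s = R powr (2 * s)" by (simp add: powr_powr)
      ultimately show ?thesis unfolding W_def by simp
    qed
    finally have jw: "(japan x powr s)^2 \<le> W" .
    have "(hR R x)^2 \<le> 1" using hR_bounds[OF R0, of x] by (simp add: power_le_one)
    then have "(japan x powr s)^2 * (hR R x)^2 \<le> W * 1"
      using jw W0 by (intro mult_mono) auto
    then show ?thesis unfolding ind cm by simp
  qed
  have lo: "(\<Prod>b\<in>Basis. (\<lambda>t. (1/4) * indicator {-(R/2)..R/2} t) (x \<bullet> b)) \<le> (cmod (f x))^2" for x
  proof -
    have "(\<Prod>b\<in>Basis. (\<lambda>t. (1/4) * indicator {-(R/2)..R/2} t) (x \<bullet> b)) \<le> (\<Prod>b\<in>Basis. (phiR R (x \<bullet> b))^2)"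
    proof (rule prod_mono, safe)
      fix b :: "real^'n" assume "b \<in> Basis"
      show "0 \<le> (1/4::real) * indicator {-(R/2)..R/2} (x \<bullet> b)" by simp
      show "1/4 * indicator {-(R/2)..R/2} (x \<bullet> b) \<le> (phiR R (x \<bullet> b))^2"
      proof (cases "\<bar>x \<bullet> b\<bar> \<le> R/2")
        case True
        then have "1/2 \<le> phiR R (x \<bullet> b)" by (rule phiR_half[OF R0])
        then have "(1/2)^2 \<le> (phiR R (x \<bullet> b))^2" by (intro power_mono) auto
        then show ?thesis using True by (auto simp: indicator_def abs_le_iff power2_eq_square)
      next
        case False then show ?thesis by (auto simp: indicator_def abs_le_iff)
      qed
    qed
    also have "\<dots> = (hR R x)^2" by (simp add: hR_def prod_power_distrib)
    also have "\<dots> \<le> (japan x powr s)^2 * (hR R x)^2"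
    proof -
      have "1 \<le> japan x powr s" using japan_ge1[of x] s by (rule ge_one_powr_ge_zero)
      then have "1 \<le> (japan x powr s)^2" by (simp add: one_le_power)
      then show ?thesis by (simp add: mult_le_cancel_right1)
    qed
    finally show ?thesis by (simp add: cm)
  qed
  have Iup: "integrable lborel (\<lambda>x::real^'n. \<Prod>b\<in>Basis. (\<lambda>t. (1::real) * indicator {-R..R} t) (x \<bullet> b))
     \<and> integral\<^sup>L lborel (\<lambda>x::real^'n. \<Prod>b\<in>Basis. (\<lambda>t. (1::real) * indicator {-R..R} t) (x \<bullet> b)) = (1 * (2*R))^D"
    unfolding D_def using R0 by (intro indic_prod) auto
  have Ilo: "integrable lborel (\<lambda>x::real^'n. \<Prod>b\<in>Basis. (\<lambda>t. (1/4::real) * indicator {-(R/2)..R/2} t) (x \<bullet> b))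
     \<and> integral\<^sup>L lborel (\<lambda>x::real^'n. \<Prod>b\<in>Basis. (\<lambda>t. (1/4::real) * indicator {-(R/2)..R/2} t) (x \<bullet> b)) = ((1/4) * (2*(R/2)))^D"
    unfolding D_def using R0 by (intro indic_prod) auto
  have meas: "(\<lambda>x. (cmod (f x))^2) \<in> borel_measurable lborel"
  proof -
    have "continuous_on UNIV (\<lambda>x. (cmod (f x))^2)" using cf by (intro continuous_intros)
    then have "(\<lambda>x. (cmod (f x))^2) \<in> borel_measurable borel" by (rule borel_measurable_continuous_onI)
    then show ?thesis by simp
  qed
  show int: "integrable lborel (\<lambda>x. (cmod (f x))^2)"
  proof (rule Bochner_Integration.integrable_bound[OF _ meas])
    show "integrable lborel (\<lambda>x::real^'n. W * (\<Prod>b\<in>Basis. (\<lambda>t. 1 * indicator {-R..R} t) (x \<bullet> b)))"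
      using Iup by (intro integrable_mult_right) auto
    show "AE x in lborel. norm ((cmod (f x))^2) \<le> norm (W * (\<Prod>b\<in>Basis. (\<lambda>t. 1 * indicator {-R..R} t) (x \<bullet> b)))"
    proof (rule AE_I2)
      fix x :: "real^'n"
      have P0: "0 \<le> (\<Prod>b\<in>Basis. (\<lambda>t. (1::real) * indicator {-R..R} t) (x \<bullet> b))"
        by (intro prod_nonneg) auto
      show "norm ((cmod (f x))^2) \<le> norm (W * (\<Prod>b\<in>Basis. (\<lambda>t. (1::real) * indicator {-R..R} t) (x \<bullet> b)))"
        using up[of x] W0 P0 by simp
    qed
  qed
  have "integral\<^sup>L lborel (\<lambda>x. (cmod (f x))^2) \<le> integral\<^sup>L lborel (\<lambda>x::real^'n. W * (\<Prod>b\<in>Basis. (\<lambda>t. 1 * indicator {-R..R} t) (x \<bullet> b)))"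
    using Iup int up by (intro integral_mono integrable_mult_right) auto
  also have "\<dots> = W * (2*R)^D" using Iup by simp
  finally show "integral\<^sup>L lborel (\<lambda>x. (cmod (f x))^2) \<le> ((1 + (real D)^2) powr s) * (R powr (2 * s)) * ((2*R)^D)"
    by (simp add: W_def)
  have "0 < ((1/4) * (2*(R/2)))^D" using R0 by simp
  also have "\<dots> = integral\<^sup>L lborel (\<lambda>x::real^'n. \<Prod>b\<in>Basis. (\<lambda>t. (1/4::real) * indicator {-(R/2)..R/2} t) (x \<bullet> b))"
    using Ilo by simp
  also have "\<dots> \<le> integral\<^sup>L lborel (\<lambda>x. (cmod (f x))^2)"
    using Ilo int lo by (intro integral_mono) auto
  finally show "0 < integral\<^sup>L lborel (\<lambda>x. (cmod (f x))^2)" .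
qed

lemma alg_part:
  fixes R s :: real and D :: nat
  assumes R: "R > 0"
  shows "(R/2)^(2*D) * (R^2/((real D)^2+1)) * (1/(3*R))^D / (((1 + (real D)^2) powr s) * (R powr (2 * s)) * ((2*R)^D))
       = R powr (2 - 2 * s) / (24^D * (1 + (real D)^2) * (1 + (real D)^2) powr s)"
proof -
  have e1: "R powr (2 - 2 * s) = R^2 / R powr (2 * s)" using R by (simp add: powr_diff powr_numeral)
  have e2: "(R/2)^(2*D) = R^D * R^D / 4^D" by (simp add: power_mult power_divide power_mult_distrib power2_eq_square)
  have e3: "(1/(3*R))^D = 1 / (3^D * R^D)" by (simp add: power_divide power_mult_distrib)
  have e4: "(2*R)^D = 2^D * R^D" by (simp add: power_mult_distrib)
  have e5: "(24::real)^D = 4^D * 3^D * 2^D" by (simp flip: power_mult_distrib)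
  have q: "0 < 1 + (real D)^2" by (metis add_pos_nonneg zero_less_one zero_le_power2)
  have p: "0 < (1 + (real D)^2) powr s" "0 < R powr (2 * s)" "0 < R^D" using R q by auto
  define T where "T = 1 + (real D)^2"
  have T': "(real D)^2 + 1 = T" unfolding T_def by simp
  have gen: "\<And>X P Q A2 A3 A4 T R2. X > 0 \<Longrightarrow> P > 0 \<Longrightarrow> Q > 0 \<Longrightarrow> A2 > 0 \<Longrightarrow> A3 > 0 \<Longrightarrow> A4 > 0 \<Longrightarrow> T > 0 \<Longrightarrow>
     X * X / A4 * (R2 / T) * (1 / (A3 * X)) / (P * Q * (A2 * X)) = (R2 / Q) / (A4 * A3 * A2 * T * P :: real)"
    by (simp add: field_simps)
  show ?thesis unfolding e1 e2 e3 e4 e5 T' T_def[symmetric] using p q R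
    by (intro gen) (auto simp: T_def)
qed


lemma uh_cont: "continuous_on UNIV (uh_symbol K :: real^'n::finite \<Rightarrow> real)"
  unfolding uh_symbol_def by (intro continuous_intros)

lemma PsiR_meas[measurable]: "PsiR R \<in> borel_measurable (borel :: ('a::euclidean_space) measure)"
  unfolding PsiR_def by measurable

lemma form_part:
  fixes K :: "'n::finite set" and s R :: real
  assumes s: "0 \<le> s" and R: "R \<ge> 1"
  defines "f \<equiv> (\<lambda>x::real^'n. complex_of_real (japan x powr s * hR R x))"
  defines "D \<equiv> DIM(real^'n)"
  defines "z \<equiv> Complex 0 (1/R^2)"
  shows "(R/2)^(2*D) * (R^2/((real D)^2+1)) * (1/(3*R))^D \<le> cmod (wres_form K s z f f)"
proof -
  have R0: "R > 0" using R by simp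
  have dq: "0 < (real D)^2 + 1" by (metis add_nonneg_pos zero_less_one zero_le_power2)
  have jp: "0 < japan x" for x using japan_ge1[of x] by simp
  have inner: "(\<lambda>x. complex_of_real (japan x powr (-s)) * f x) = (\<lambda>x. complex_of_real (hR R x))"
  proof
    fix x :: "real^'n"
    have "japan x powr (-s) * japan x powr s = 1" using jp[of x] by (simp add: powr_add[symmetric])
    then have "japan x powr (-s) * (japan x powr s * hR R x) = hR R x" by (simp add: mult.assoc[symmetric])
    then show "complex_of_real (japan x powr (-s)) * f x = complex_of_real (hR R x)"
      unfolding f_def by (simp only: of_real_mult[symmetric])
  qed
  define e where "e = 1/R^2"
  have e0: "e > 0" using R0 by (simp add: e_def)
  have ze: "z = Complex 0 e" by (simp add: z_def e_def)
  define G where "G = (\<lambda>\<xi>::real^'n. complex_of_real ((PsiR R \<xi>)^2) / (complex_of_real (uh_symbol K \<xi>) - z))"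
  have form_eq: "wres_form K s z f f = integral\<^sup>L lborel G"
    unfolding wres_form_def inner fourier_hR[OF R0] G_def by (simp add: power2_eq_square)
  have uh_meas[measurable]: "uh_symbol K \<in> borel_measurable (borel :: (real^'n) measure)"
    by (rule borel_measurable_continuous_onI[OF uh_cont])
  have Gm: "G \<in> borel_measurable lborel" unfolding G_def by measurable
  have den: "e \<le> cmod (complex_of_real (uh_symbol K \<xi>) - z)" for \<xi>
  proof -
    have "\<bar>Im (complex_of_real (uh_symbol K \<xi>) - z)\<bar> \<le> cmod (complex_of_real (uh_symbol K \<xi>) - z)"
      by (rule abs_Im_le_cmod)
    then show ?thesis using e0 by (simp add: ze)
  qed
  have Gb: "norm (G \<xi>) \<le> (1/e) * (PsiR R \<xi>)^2" for \<xi>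
  proof -
    have "norm (G \<xi>) = (PsiR R \<xi>)^2 / cmod (complex_of_real (uh_symbol K \<xi>) - z)"
      unfolding G_def norm_divide norm_of_real by simp
    also have "\<dots> \<le> (PsiR R \<xi>)^2 / e" using e0 den[of \<xi>] by (intro divide_left_mono) (auto intro!: mult_pos_pos)
    finally show ?thesis by simp
  qed
  have Gint: "integrable lborel G"
  proof (rule Bochner_Integration.integrable_bound[OF _ Gm])
    show "integrable lborel (\<lambda>\<xi>::real^'n. (1/e) * (PsiR R \<xi>)^2)"
      using PsiR2_int[OF R0] by (rule integrable_mult_right)
    show "AE x in lborel. norm (G x) \<le> norm ((1/e) * (PsiR R x)^2)"
      using Gb e0 by (intro AE_I2) (simp add: abs_mult)
  qed
  have ImG: "Im (G \<xi>) = (PsiR R \<xi>)^2 * (e / ((uh_symbol K \<xi>)^2 + e^2))" for \<xi>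
    by (simp add: G_def ze Im_divide power2_eq_square)
  have ImI: "Im (integral\<^sup>L lborel G) = integral\<^sup>L lborel (\<lambda>\<xi>. Im (G \<xi>))"
    using integral_bounded_linear[OF bounded_linear_Im Gint] by simp
  define \<delta> where "\<delta> = 1/(6*R)"
  have \<delta>0: "\<delta> > 0" using R0 by (simp add: \<delta>_def)
  define c where "c = (R/2)^(2*D) * (R^2/((real D)^2+1))"
  have c0: "0 \<le> c" using R0 by (simp add: c_def add_pos_nonneg)
  have pw: "c * (\<Prod>b\<in>Basis. (\<lambda>t. (1::real) * indicator {-\<delta>..\<delta>} t) (\<xi> \<bullet> b)) \<le> Im (G \<xi>)" for \<xi> :: "real^'n"
  proof (cases "\<forall>b\<in>Basis. \<bar>\<xi> \<bullet> b\<bar> \<le> \<delta>")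
    case True
    have ind: "(\<Prod>b\<in>Basis. (\<lambda>t. (1::real) * indicator {-\<delta>..\<delta>} t) (\<xi> \<bullet> b)) = 1"
      using True by (intro prod.neutral) (auto simp: indicator_def abs_le_iff)
    have "(R/2)^D \<le> PsiR R \<xi>"
    proof -
      have "(\<Prod>b\<in>(Basis::(real^'n) set). R/2) \<le> (\<Prod>b\<in>Basis. psiR R (\<xi> \<bullet> b))"
        using True psiR_ge[OF R0] R0 unfolding \<delta>_def by (intro prod_mono) auto
      then show ?thesis by (simp add: PsiR_def D_def)
    qed
    then have "((R/2)^D)^2 \<le> (PsiR R \<xi>)^2" using R0 by (intro power_mono) auto
    then have P2: "(R/2)^(2*D) \<le> (PsiR R \<xi>)^2" by (simp add: power_mult mult.commute)
    define p where "p = uh_symbol K \<xi>"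
    have "\<bar>p\<bar> \<le> (\<Sum>b\<in>Basis. (\<xi> \<bullet> b)^2)" unfolding p_def by (rule uh_bound)
    also have "\<dots> \<le> (\<Sum>b\<in>(Basis::(real^'n) set). \<delta>^2)"
      using True by (intro sum_mono) (auto simp: abs_le_square_iff[symmetric])
    also have "\<dots> = real D * \<delta>^2" by (simp add: D_def)
    finally have pb: "\<bar>p\<bar> \<le> real D * \<delta>^2" .
    have "p^2 \<le> (real D * \<delta>^2)^2" using pb by (metis abs_ge_zero power2_abs power_mono)
    also have "\<dots> = (real D)^2 / (1296 * R^4)" by (simp add: \<delta>_def power_mult_distrib power_divide)
    also have "\<dots> \<le> (real D)^2 / R^4" using R0 by (intro divide_left_mono) auto
    finally have p2: "p^2 \<le> (real D)^2 / R^4" .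
    have e2: "e^2 = 1 / R^4" by (simp add: e_def power_divide flip: power_mult)
    have dpos: "0 < p^2 + e^2" using e0 by (simp add: add_nonneg_pos)
    have "p^2 + e^2 \<le> ((real D)^2 + 1) / R^4" using p2 e2 by (simp add: add_divide_distrib)
    then have "e / (((real D)^2 + 1) / R^4) \<le> e / (p^2 + e^2)"
      using dpos e0 dq R0 by (intro divide_left_mono) (auto intro!: mult_pos_pos divide_pos_pos)
    moreover have "e / (((real D)^2 + 1) / R^4) = R^2/((real D)^2+1)"
      using R0 by (simp add: e_def field_simps power2_eq_square power4_eq_xxxx)
    ultimately have q: "R^2/((real D)^2+1) \<le> e / (p^2 + e^2)" by linarith
    have "c \<le> (PsiR R \<xi>)^2 * (e / (p^2 + e^2))"
      unfolding c_def using P2 q R0 dq e0 dpos by (intro mult_mono) auto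
    then show ?thesis unfolding ind ImG p_def by simp
  next
    case False
    then obtain b where b: "b \<in> Basis" "\<bar>\<xi> \<bullet> b\<bar> > \<delta>" by auto
    have z0: "(\<Prod>b\<in>Basis. (\<lambda>t. (1::real) * indicator {-\<delta>..\<delta>} t) (\<xi> \<bullet> b)) = 0"
      using b by (intro prod_zero) (auto intro!: bexI[of _ b] simp: indicator_def abs_le_iff)
    have "0 \<le> Im (G \<xi>)" unfolding ImG using e0 by (intro mult_nonneg_nonneg divide_nonneg_pos) (auto simp: add_nonneg_pos)
    then show ?thesis unfolding z0 by simp
  qed
  have Ic: "integrable lborel (\<lambda>x::real^'n. \<Prod>b\<in>Basis. (\<lambda>t. (1::real) * indicator {-\<delta>..\<delta>} t) (x \<bullet> b))
     \<and> integral\<^sup>L lborel (\<lambda>x::real^'n. \<Prod>b\<in>Basis. (\<lambda>t. (1::real) * indicator {-\<delta>..\<delta>} t) (x \<bullet> b)) = (1 * (2*\<delta>))^D"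
    unfolding D_def using \<delta>0 by (intro indic_prod) auto
  have "(R/2)^(2*D) * (R^2/((real D)^2+1)) * (1/(3*R))^D = c * (1 * (2*\<delta>))^D"
    using R0 by (simp add: c_def \<delta>_def)
  also have "\<dots> = integral\<^sup>L lborel (\<lambda>x::real^'n. c * (\<Prod>b\<in>Basis. (\<lambda>t. (1::real) * indicator {-\<delta>..\<delta>} t) (x \<bullet> b)))"
    using Ic by simp
  also have "\<dots> \<le> integral\<^sup>L lborel (\<lambda>\<xi>. Im (G \<xi>))"
    using Ic Gint pw by (intro integral_mono integrable_mult_right) auto
  also have "\<dots> = Im (wres_form K s z f f)" using ImI form_eq by simp
  also have "\<dots> \<le> cmod (wres_form K s z f f)" using abs_Im_le_cmod[of "wres_form K s z f f"] by linarith
  finally show ?thesis .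
qed


theorem proposition2p11:
  fixes K :: "'n::finite set" and s :: real
  assumes "CARD('n) \<ge> 3" and "0 \<le> s" and "s < 1"
  shows "(SUP z \<in> - spec_P K. wres_norm K s z) = \<infinity>"
proof (rule SUP_PInfty)
  fix n :: nat
  have s: "0 \<le> s" and s1: "s < 1" using assms by auto
  define D where "D = DIM(real^'n)"
  define T where "T = 1 + (real D)^2"
  have T0: "T > 0" unfolding T_def by (metis add_pos_nonneg zero_less_one zero_le_power2)
  define C where "C = 24^D * T * T powr s"
  have C0: "C > 0" using T0 by (simp add: C_def)
  define R where "R = max 1 ((real n * C) powr (1/(2 - 2 * s)))"
  have R1: "R \<ge> 1" by (simp add: R_def)
  have R0: "R > 0" using R1 by simp
  have RC: "real n \<le> R powr (2 - 2 * s) / C"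
  proof -
    have ex: "2 - 2 * s > 0" using s1 by simp
    have "real n * C = ((real n * C) powr (1/(2 - 2 * s))) powr (2 - 2 * s)"
      using ex C0 by (simp add: powr_powr)
    also have "\<dots> \<le> R powr (2 - 2 * s)"
      using ex by (intro powr_mono2) (auto simp: R_def)
    finally show ?thesis using C0 by (simp add: pos_le_divide_eq)
  qed
  define f where "f = (\<lambda>x::real^'n. complex_of_real (japan x powr s * hR R x))"
  define z where "z = Complex 0 (1/R^2)"
  have zin: "z \<in> - spec_P K"
  proof -
    have "spec_P K \<subseteq> \<real>"
      unfolding spec_P_def by (rule closure_minimal[OF _ closed_complex_Reals]) auto
    moreover have "z \<notin> \<real>" using R0 by (simp add: z_def complex_is_Real_iff)
    ultimately show ?thesis by auto
  qed
  note L2 = l2_part[OF s R1, where 'n='n, folded f_def D_def]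
  define A where "A = integral\<^sup>L lborel (\<lambda>x. (cmod (f x))^2)"
  have A0: "0 < A" and AU: "A \<le> (1 + (real D)^2) powr s * R powr (2 * s) * (2*R)^D"
    unfolding A_def f_def using L2 by simp_all
  have l2: "l2norm f * l2norm f = A" unfolding l2norm_def A_def[symmetric] using A0 by simp
  have l2p: "l2norm f > 0" unfolding l2norm_def A_def[symmetric] using A0 by simp
  have Lb: "(R/2)^(2*D) * (R^2/((real D)^2+1)) * (1/(3*R))^D \<le> cmod (wres_form K s z f f)"
    using form_part[OF s R1, where K=K] unfolding f_def D_def z_def .
  define L where "L = (R/2)^(2*D) * (R^2/((real D)^2+1)) * (1/(3*R))^D"
  have L0: "0 \<le> L" unfolding L_def using R0 by (simp add: add_pos_nonneg)
  have "real n \<le> R powr (2 - 2 * s) / C" by (rule RC)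
  also have "\<dots> = L / ((1 + (real D)^2) powr s * R powr (2 * s) * (2*R)^D)"
    unfolding L_def C_def T_def using alg_part[OF R0, of D s] by simp
  also have "\<dots> \<le> L / A" using L0 A0 AU by (intro divide_left_mono) auto
  also have "\<dots> \<le> cmod (wres_form K s z f f) / A" using Lb A0 unfolding L_def by (intro divide_right_mono) auto
  also have "\<dots> = cmod (wres_form K s z f f) / (l2norm f * l2norm f)" by (simp add: l2)
  finally have rat: "real n \<le> cmod (wres_form K s z f f) / (l2norm f * l2norm f)" .
  have mem: "(f, f) \<in> {(f, g). f \<in> Cc \<and> g \<in> Cc \<and> l2norm f > 0 \<and> l2norm g > 0}"
    using L2 l2p by simp
  have "ereal (real n) \<le> wres_norm K s z"
    unfolding wres_norm_def by (rule SUP_upper2[OF mem]) (simp add: rat)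
  with zin show "\<exists>z\<in>- spec_P K. ereal (real n) \<le> wres_norm K s z" by blast
qed

end
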